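(* Let $(L,[\cdot,\cdot],\alpha,\beta)$ be a left BiHom-Lie algebra and let $f:L\to L$ be a linear map with $f\circ\alpha=\alpha\circ f$ and $f\circ\beta=\beta\circ f$. Define two operations on $L$ by $x\star y=[f(x),y]$ and $x\star' y=[x,f(y)]$ for all $x,y\in L$. Then: (i) $(L,\star,\alpha,\beta)$ is a BiHom-Novikov algebra if and only if for all $x,y,z\in L$: $f([f(\beta(x)),\alpha(y)]+[\beta(x),f(\alpha(y))])-[f(\beta(x)),f(\alpha(y))]\in Z_l(\beta(L))$ and $[f([f(x),\beta(y)]),\alpha\beta(z)]=[f([f(x),\beta(z)]),\alpha\beta(y)]$. (ii) If $\alpha$ and $\beta$ are bijective, then $(L,\star',\alpha,\beta)$ is a BiHom-Novikov algebra if and only if for all $x,y,z\in L$: $[[\beta(x),f(\alpha(y))]+[f(\beta(x)),\alpha(y)],f(\beta(z))]-[\alpha\beta(x),f([\alpha(y),f(z)])]+[\alpha\beta(y),f([\alpha(x),f(z)])]=0$ and $[f(\beta(x)),f(\alpha(y))]\in Z_r(\alpha(L))$.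
   Context: Work over a field. A left BiHom-Lie algebra is a 4-tuple $(L,[\cdot,\cdot],\alpha,\beta)$ with $[\cdot,\cdot]$ bilinear and $\alpha,\beta:L\to L$ linear such that $\alpha\beta=\beta\alpha$, $\alpha([x,y])=[\alpha(x),\alpha(y)]$, $\beta([x,y])=[\beta(x),\beta(y)]$, $[\alpha\beta(x),[y,z]]=[[\beta(x),y],\beta(z)]+[\beta(y),[\alpha(x),z]]$ and $[\beta(x),\alpha(y)]=-[\beta(y),\alpha(x)]$ for all $x,y,z$. Let $Z_l(\beta(L))=\{x\in L: [x,\beta(y)]=0\ \forall y\in L\}$ and $Z_r(\alpha(L))=\{x\in L:[\alpha(y),x]=0\ \forall y\in L\}$. A BiHom-Novikov algebra is a 4-tuple $(A,\mu,\alpha,\beta)$ with $\mu:A\otimes A\to A$ (written $x\cdot y$) and commuting linear maps $\alpha,\beta$ such that for all $x,y,z$: $\alpha(x\cdot y)=\alpha(x)\cdot\alpha(y)$, $\beta(x\cdot y)=\beta(x)\cdot\beta(y)$, $(\beta(x)\cdot\alpha(y))\cdot\beta(z)-\alpha\beta(x)\cdot(\alpha(y)\cdot z)=(\beta(y)\cdot\alpha(x))\cdot\beta(z)-\alpha\beta(y)\cdot(\alpha(x)\cdot z)$, and $(x\cdot\beta(y))\cdot\alpha\beta(z)=(x\cdot\beta(z))\cdot\alpha\beta(y)$. *)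

theory Defs
  imports "HOL.Vector_Spaces"
begin

definition bilinear_op :: "('k::field \<Rightarrow> 'v::ab_group_add \<Rightarrow> 'v) \<Rightarrow> ('v \<Rightarrow> 'v \<Rightarrow> 'v) \<Rightarrow> bool" where
  "bilinear_op scale b \<longleftrightarrow>
     (\<forall>x. Vector_Spaces.linear scale scale (b x)) \<and>
     (\<forall>y. Vector_Spaces.linear scale scale (\<lambda>x. b x y))"

definition left_BiHom_Lie :: "('k::field \<Rightarrow> 'v::ab_group_add \<Rightarrow> 'v) \<Rightarrow> ('v \<Rightarrow> 'v \<Rightarrow> 'v)
    \<Rightarrow> ('v \<Rightarrow> 'v) \<Rightarrow> ('v \<Rightarrow> 'v) \<Rightarrow> bool" where
  "left_BiHom_Lie scale br \<alpha> \<beta> \<longleftrightarrow>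
     bilinear_op scale br \<and>
     Vector_Spaces.linear scale scale \<alpha> \<and> Vector_Spaces.linear scale scale \<beta> \<and>
     (\<alpha> \<circ> \<beta> = \<beta> \<circ> \<alpha>) \<and>
     (\<forall>x y. \<alpha> (br x y) = br (\<alpha> x) (\<alpha> y)) \<and>
     (\<forall>x y. \<beta> (br x y) = br (\<beta> x) (\<beta> y)) \<and>
     (\<forall>x y z. br (\<alpha> (\<beta> x)) (br y z) = br (br (\<beta> x) y) (\<beta> z) + br (\<beta> y) (br (\<alpha> x) z)) \<and>
     (\<forall>x y. br (\<beta> x) (\<alpha> y) = - br (\<beta> y) (\<alpha> x))"

definition BiHom_Novikov :: "('k::field \<Rightarrow> 'v::ab_group_add \<Rightarrow> 'v) \<Rightarrow> ('v \<Rightarrow> 'v \<Rightarrow> 'v)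
    \<Rightarrow> ('v \<Rightarrow> 'v) \<Rightarrow> ('v \<Rightarrow> 'v) \<Rightarrow> bool" where
  "BiHom_Novikov scale mu \<alpha> \<beta> \<longleftrightarrow>
     bilinear_op scale mu \<and>
     Vector_Spaces.linear scale scale \<alpha> \<and> Vector_Spaces.linear scale scale \<beta> \<and>
     (\<alpha> \<circ> \<beta> = \<beta> \<circ> \<alpha>) \<and>
     (\<forall>x y. \<alpha> (mu x y) = mu (\<alpha> x) (\<alpha> y)) \<and>
     (\<forall>x y. \<beta> (mu x y) = mu (\<beta> x) (\<beta> y)) \<and>
     (\<forall>x y z. mu (mu (\<beta> x) (\<alpha> y)) (\<beta> z) - mu (\<alpha> (\<beta> x)) (mu (\<alpha> y) z)
             = mu (mu (\<beta> y) (\<alpha> x)) (\<beta> z) - mu (\<alpha> (\<beta> y)) (mu (\<alpha> x) z)) \<and>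
     (\<forall>x y z. mu (mu x (\<beta> y)) (\<alpha> (\<beta> z)) = mu (mu x (\<beta> z)) (\<alpha> (\<beta> y)))"

definition Zl_beta :: "('v \<Rightarrow> 'v \<Rightarrow> 'v::zero) \<Rightarrow> ('v \<Rightarrow> 'v) \<Rightarrow> 'v set" where
  "Zl_beta br \<beta> = {x. \<forall>y. br x (\<beta> y) = 0}"

definition Zr_alpha :: "('v \<Rightarrow> 'v \<Rightarrow> 'v::zero) \<Rightarrow> ('v \<Rightarrow> 'v) \<Rightarrow> 'v set" where
  "Zr_alpha br \<alpha> = {x. \<forall>y. br (\<alpha> y) x = 0}"

end

theory Submission
  imports Defs
begin

lemma lin_props:
  assumes "Vector_Spaces.linear s s g"
  shows "g (a + b) = g a + g b" "g (a - b) = g a - g b" "g (- a) = - g a"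
  using assms unfolding Vector_Spaces.linear_iff_module_hom
  by (auto intro: module_hom.add module_hom.diff module_hom.neg)

theorem proposition2p12:
  fixes scale :: "'k::field \<Rightarrow> 'v::ab_group_add \<Rightarrow> 'v"
    and br :: "'v \<Rightarrow> 'v \<Rightarrow> 'v" and \<alpha> \<beta> f :: "'v \<Rightarrow> 'v"
  assumes "vector_space scale"
    and "left_BiHom_Lie scale br \<alpha> \<beta>"
    and "Vector_Spaces.linear scale scale f"
    and "f \<circ> \<alpha> = \<alpha> \<circ> f" and "f \<circ> \<beta> = \<beta> \<circ> f"
  shows "(BiHom_Novikov scale (\<lambda>x y. br (f x) y) \<alpha> \<beta> \<longleftrightarrow>
            (\<forall>x y. f (br (f (\<beta> x)) (\<alpha> y) + br (\<beta> x) (f (\<alpha> y))) - br (f (\<beta> x)) (f (\<alpha> y))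
                     \<in> Zl_beta br \<beta>) \<and>
            (\<forall>x y z. br (f (br (f x) (\<beta> y))) (\<alpha> (\<beta> z)) = br (f (br (f x) (\<beta> z))) (\<alpha> (\<beta> y))))
       \<and> (bij \<alpha> \<and> bij \<beta> \<longrightarrow>
          (BiHom_Novikov scale (\<lambda>x y. br x (f y)) \<alpha> \<beta> \<longleftrightarrow>
            (\<forall>x y z. br (br (\<beta> x) (f (\<alpha> y)) + br (f (\<beta> x)) (\<alpha> y)) (f (\<beta> z))
                      - br (\<alpha> (\<beta> x)) (f (br (\<alpha> y) (f z)))
                      + br (\<alpha> (\<beta> y)) (f (br (\<alpha> x) (f z))) = 0) \<and>
            (\<forall>x y. br (f (\<beta> x)) (f (\<alpha> y)) \<in> Zr_alpha br \<alpha>)))"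
proof -
  note L = assms(2)[unfolded left_BiHom_Lie_def bilinear_op_def]
  have linR: "\<And>x. Vector_Spaces.linear scale scale (br x)" using L by blast
  have linL: "\<And>y. Vector_Spaces.linear scale scale (\<lambda>x. br x y)" using L by blast
  have la: "Vector_Spaces.linear scale scale \<alpha>" and lb: "Vector_Spaces.linear scale scale \<beta>"
    using L by blast+
  have ab: "\<And>x. \<alpha> (\<beta> x) = \<beta> (\<alpha> x)" using L by (metis comp_apply)
  have am: "\<And>x y. \<alpha> (br x y) = br (\<alpha> x) (\<alpha> y)" using L by blast
  have bm: "\<And>x y. \<beta> (br x y) = br (\<beta> x) (\<beta> y)" using L by blast
  have jac: "\<And>x y z. br (\<alpha> (\<beta> x)) (br y z) = br (br (\<beta> x) y) (\<beta> z) + br (\<beta> y) (br (\<alpha> x) z)"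
    using L by blast
  have sk: "\<And>x y. br (\<beta> x) (\<alpha> y) = - br (\<beta> y) (\<alpha> x)" using L by blast
  have fa: "\<And>x. f (\<alpha> x) = \<alpha> (f x)" using assms(4) by (metis comp_apply)
  have fb: "\<And>x. f (\<beta> x) = \<beta> (f x)" using assms(5) by (metis comp_apply)
  have Rp: "\<And>x a b. br x (a + b) = br x a + br x b" "\<And>x a b. br x (a - b) = br x a - br x b"
    "\<And>x a. br x (- a) = - br x a"
    using lin_props[OF linR] by auto
  have Lp: "\<And>y a b. br (a + b) y = br a y + br b y" "\<And>y a b. br (a - b) y = br a y - br b y"
    "\<And>y a. br (- a) y = - br a y"
    using lin_props[OF linL] by auto
  have Fp: "\<And>a b. f (a + b) = f a + f b" "\<And>a b. f (a - b) = f a - f b" "\<And>a. f (- a) = - f a"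
    using lin_props[OF assms(3)] by auto
  have bil1: "bilinear_op scale (\<lambda>x y. br (f x) y)"
    unfolding bilinear_op_def
  proof (intro conjI allI)
    fix x show "Vector_Spaces.linear scale scale (br (f x))" by (rule linR)
  next
    fix y
    have "Vector_Spaces.linear scale scale ((\<lambda>x. br x y) \<circ> f)"
      by (rule Vector_Spaces.linear_compose[OF assms(3) linL])
    then show "Vector_Spaces.linear scale scale (\<lambda>x. br (f x) y)" by (simp add: comp_def)
  qed
  have hom1a: "\<And>x y. \<alpha> (br (f x) y) = br (f (\<alpha> x)) (\<alpha> y)" by (simp add: am fa)
  have hom1b: "\<And>x y. \<beta> (br (f x) y) = br (f (\<beta> x)) (\<beta> y)" by (simp add: bm fb)
  have key1: "br (f (br (f (\<beta> x)) (\<alpha> y))) (\<beta> z) - br (f (\<alpha> (\<beta> x))) (br (f (\<alpha> y)) z)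
      - (br (f (br (f (\<beta> y)) (\<alpha> x))) (\<beta> z) - br (f (\<alpha> (\<beta> y))) (br (f (\<alpha> x)) z))
      = br (f (br (f (\<beta> x)) (\<alpha> y) + br (\<beta> x) (f (\<alpha> y))) - br (f (\<beta> x)) (f (\<alpha> y))) (\<beta> z)"
    for x y z
  proof -
    have j: "br (f (\<alpha> (\<beta> x))) (br (f (\<alpha> y)) z)
        = br (br (f (\<beta> x)) (f (\<alpha> y))) (\<beta> z) + br (f (\<alpha> (\<beta> y))) (br (f (\<alpha> x)) z)"
      using jac[of "f x" "f (\<alpha> y)" z] by (simp add: fa fb ab)
    have s: "br (f (\<beta> y)) (\<alpha> x) = - br (\<beta> x) (f (\<alpha> y))"
      using sk[of y "f x"] sk[of x "f y"] by (simp add: fa fb)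
    show ?thesis by (simp add: j s Fp Lp algebra_simps)
  qed
  have part1: "BiHom_Novikov scale (\<lambda>x y. br (f x) y) \<alpha> \<beta> \<longleftrightarrow>
            (\<forall>x y. f (br (f (\<beta> x)) (\<alpha> y) + br (\<beta> x) (f (\<alpha> y))) - br (f (\<beta> x)) (f (\<alpha> y))
                     \<in> Zl_beta br \<beta>) \<and>
            (\<forall>x y z. br (f (br (f x) (\<beta> y))) (\<alpha> (\<beta> z)) = br (f (br (f x) (\<beta> z))) (\<alpha> (\<beta> y)))"
    unfolding BiHom_Novikov_def Zl_beta_def mem_Collect_eq
    using bil1 la lb L hom1a hom1b key1
    by (simp add: eq_iff_diff_eq_0[where a="br (f (br (f (\<beta> _)) (\<alpha> _))) (\<beta> _) - _"])
  have part2: "BiHom_Novikov scale (\<lambda>x y. br x (f y)) \<alpha> \<beta> \<longleftrightarrow>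
            (\<forall>x y z. br (br (\<beta> x) (f (\<alpha> y)) + br (f (\<beta> x)) (\<alpha> y)) (f (\<beta> z))
                      - br (\<alpha> (\<beta> x)) (f (br (\<alpha> y) (f z)))
                      + br (\<alpha> (\<beta> y)) (f (br (\<alpha> x) (f z))) = 0) \<and>
            (\<forall>x y. br (f (\<beta> x)) (f (\<alpha> y)) \<in> Zr_alpha br \<alpha>)"
    if bb: "bij \<beta>"
  proof -
    have bil2: "bilinear_op scale (\<lambda>x y. br x (f y))"
      unfolding bilinear_op_def
    proof (intro conjI allI)
      fix y show "Vector_Spaces.linear scale scale (\<lambda>x. br x (f y))" by (rule linL)
    next
      fix x
      have "Vector_Spaces.linear scale scale (br x \<circ> f)"
        by (rule Vector_Spaces.linear_compose[OF assms(3) linR])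
      then show "Vector_Spaces.linear scale scale (\<lambda>y. br x (f y))" by (simp add: comp_def)
    qed
    have hom2a: "\<And>x y. \<alpha> (br x (f y)) = br (\<alpha> x) (f (\<alpha> y))" by (simp add: am fa)
    have hom2b: "\<And>x y. \<beta> (br x (f y)) = br (\<beta> x) (f (\<beta> y))" by (simp add: bm fb)
    have key3: "br (br (\<beta> x) (f (\<alpha> y))) (f (\<beta> z)) - br (\<alpha> (\<beta> x)) (f (br (\<alpha> y) (f z)))
      - (br (br (\<beta> y) (f (\<alpha> x))) (f (\<beta> z)) - br (\<alpha> (\<beta> y)) (f (br (\<alpha> x) (f z))))
      = br (br (\<beta> x) (f (\<alpha> y)) + br (f (\<beta> x)) (\<alpha> y)) (f (\<beta> z))
                      - br (\<alpha> (\<beta> x)) (f (br (\<alpha> y) (f z)))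
                      + br (\<alpha> (\<beta> y)) (f (br (\<alpha> x) (f z)))" for x y z
    proof -
      have s: "br (\<beta> y) (f (\<alpha> x)) = - br (f (\<beta> x)) (\<alpha> y)"
        using sk[of y "f x"] by (simp add: fa fb)
      show ?thesis by (simp add: s Lp algebra_simps)
    qed
    have key4: "br (br (\<beta> a) (f (\<beta> y))) (f (\<alpha> (\<beta> z))) - br (br (\<beta> a) (f (\<beta> z))) (f (\<alpha> (\<beta> y)))
        = br (\<alpha> (\<beta> a)) (br (f (\<beta> y)) (f (\<alpha> z)))" for a y z
    proof -
      have j: "br (\<alpha> (\<beta> a)) (br (f (\<beta> y)) (f (\<alpha> z)))
          = br (br (\<beta> a) (f (\<beta> y))) (f (\<alpha> (\<beta> z))) + br (\<beta> (f (\<beta> y))) (br (\<alpha> a) (f (\<alpha> z)))"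
        using jac[of a "f (\<beta> y)" "f (\<alpha> z)"] by (simp add: fa fb ab)
      have s: "br (\<beta> (f (\<beta> y))) (br (\<alpha> a) (f (\<alpha> z))) = - br (br (\<beta> a) (f (\<beta> z))) (f (\<alpha> (\<beta> y)))"
        using sk[of "br a (f z)" "f (\<beta> y)"] by (simp add: fa fb ab am bm)
      show ?thesis by (simp add: j s)
    qed
    have sur: "\<And>x. \<exists>a. x = \<beta> a" using bb by (metis bij_pointE)
    have c3: "(\<forall>x y z. br (br (\<beta> x) (f (\<alpha> y))) (f (\<beta> z)) - br (\<alpha> (\<beta> x)) (f (br (\<alpha> y) (f z)))
      = br (br (\<beta> y) (f (\<alpha> x))) (f (\<beta> z)) - br (\<alpha> (\<beta> y)) (f (br (\<alpha> x) (f z))))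
      \<longleftrightarrow> (\<forall>x y z. br (br (\<beta> x) (f (\<alpha> y)) + br (f (\<beta> x)) (\<alpha> y)) (f (\<beta> z))
                      - br (\<alpha> (\<beta> x)) (f (br (\<alpha> y) (f z)))
                      + br (\<alpha> (\<beta> y)) (f (br (\<alpha> x) (f z))) = 0)"
      using key3 by (metis eq_iff_diff_eq_0)
    have c4: "(\<forall>x y z. br (br x (f (\<beta> y))) (f (\<alpha> (\<beta> z))) = br (br x (f (\<beta> z))) (f (\<alpha> (\<beta> y))))
      \<longleftrightarrow> (\<forall>x y. br (f (\<beta> x)) (f (\<alpha> y)) \<in> Zr_alpha br \<alpha>)"
      unfolding Zr_alpha_def mem_Collect_eq
    proof
      assume H: "\<forall>x y z. br (br x (f (\<beta> y))) (f (\<alpha> (\<beta> z))) = br (br x (f (\<beta> z))) (f (\<alpha> (\<beta> y)))"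
      show "\<forall>x y w. br (\<alpha> w) (br (f (\<beta> x)) (f (\<alpha> y))) = 0"
      proof (intro allI)
        fix x y w
        obtain a where "w = \<beta> a" using sur by blast
        then show "br (\<alpha> w) (br (f (\<beta> x)) (f (\<alpha> y))) = 0"
          using key4[of a x y] H by simp
      qed
    next
      assume H: "\<forall>x y w. br (\<alpha> w) (br (f (\<beta> x)) (f (\<alpha> y))) = 0"
      show "\<forall>x y z. br (br x (f (\<beta> y))) (f (\<alpha> (\<beta> z))) = br (br x (f (\<beta> z))) (f (\<alpha> (\<beta> y)))"
      proof (intro allI)
        fix x y z
        obtain a where "x = \<beta> a" using sur by blast
        then show "br (br x (f (\<beta> y))) (f (\<alpha> (\<beta> z))) = br (br x (f (\<beta> z))) (f (\<alpha> (\<beta> y)))"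
          using key4[of a y z] H by (simp add: eq_iff_diff_eq_0[symmetric])
      qed
    qed
    show ?thesis
      unfolding BiHom_Novikov_def
      using bil2 la lb L hom2a hom2b c3 c4 by simp
  qed
  show ?thesis using part1 part2 by blast
qed

end
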